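(* Consider the Estimation phase of the ENE algorithm described in the context, and fix an agent $n$. Let $E_n^{j,1,M+1}$ be the event $\left|\bar r_n^{j,1,M+1}-\mathbb E\,\bar r_n^{j,1,M+1}\right|>2^{-N-4}\,\mathbb E\,\bar r_n^{j,1,M+1}$. Then $\mathbb P(E_n^{j,1,M+1})=O\left(\exp(-j^{1.4})\right)$ as $j\to\infty$.
   Context: Model. $N$ agents share $M$ resources. Time is slotted. The load of an agent accessing a resource is the number of agents (including itself) accessing the same resource at the same time. Each agent $n$ has a utility $U_{n,1,1}\in[0,U_{\max}]$ for resource 1, constant in time; its utility on resource 1 with load $\ell$ is $U_{n,1,\ell}=U_{n,1,1}/\ell$. An agent accessing a resource observes the reward equal to its utility plus noise $\nu$, where $\nu$ is zero-mean sub-Gaussian with variance proxy $b$, i.i.d. over time and agents. Block $M+1$ of the Estimation phase of the ENE algorithm: time is divided into epochs $i=1,2,\dots$, and in epoch $i$ this block has $i$ time steps. At each such time step each agent independently accesses resource 1 with probability $1/2$ and otherwise accesses no resource. $\bar r_n^{j,1,M+1}$ is the average of agent $n$'s rewards over all time steps of this block in epochs $1,\dots,j$ in which agent $n$ accessed resource 1. *)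

theory Defs
  imports "HOL-Probability.Probability" "HOL-Library.Landau_Symbols"
begin

text \<open>Time steps of block M+1 are enumerated consecutively over epochs: epoch i
  occupies the steps t with i(i-1)/2 \<le> t < i(i+1)/2, so epochs 1..j are the
  steps t < j(j+1)/2.\<close>
definition steps_upto :: "nat \<Rightarrow> nat" where
  "steps_upto j = j * (j + 1) div 2"

definition subgaussian :: "'a measure \<Rightarrow> ('a \<Rightarrow> real) \<Rightarrow> real \<Rightarrow> bool" where
  "subgaussian M X b \<longleftrightarrow> integrable M X \<and> integral\<^sup>L M X = 0 \<and>
     (\<forall>s::real. integrable M (\<lambda>\<omega>. exp (s * X \<omega>)) \<and>
        integral\<^sup>L M (\<lambda>\<omega>. exp (s * X \<omega>)) \<le> exp (s\<^sup>2 * b / 2))"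

definition load :: "nat \<Rightarrow> (nat \<Rightarrow> nat \<Rightarrow> 'a \<Rightarrow> bool) \<Rightarrow> nat \<Rightarrow> 'a \<Rightarrow> nat" where
  "load N A t \<omega> = card {k. k < N \<and> A t k \<omega>}"

text \<open>Average reward of agent n over the steps of block M+1 in epochs 1..j in
  which n accessed resource 1 (reward = U/load + noise). Convention: 0 if there
  is no such step (division by zero is 0 in Isabelle).\<close>
definition rbar :: "nat \<Rightarrow> nat \<Rightarrow> real \<Rightarrow> (nat \<Rightarrow> nat \<Rightarrow> 'a \<Rightarrow> bool) \<Rightarrow>
    (nat \<Rightarrow> nat \<Rightarrow> 'a \<Rightarrow> real) \<Rightarrow> nat \<Rightarrow> 'a \<Rightarrow> real" where
  "rbar N n U A \<nu> j \<omega> =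
     (let S = {t. t < steps_upto j \<and> A t n \<omega>}
      in (\<Sum>t\<in>S. U / real (load N A t \<omega>) + \<nu> t n \<omega>) / real (card S))"

end

theory Submission
  imports Defs "HOL-Real_Asymp.Real_Asymp"
begin


lemma (in prob_space) chernoff_subg:
  fixes X :: "'i \<Rightarrow> 'a \<Rightarrow> real"
  assumes fin: "finite I" and ind: "indep_vars (\<lambda>_. borel) X I"
    and mgf: "\<And>i s. i \<in> I \<Longrightarrow> (\<integral>\<^sup>+x. ennreal (exp (s * X i x)) \<partial>M) \<le> ennreal (exp (s\<^sup>2 * \<sigma> / 2))"
    and \<sigma>: "\<sigma> > 0" and d: "d \<ge> 0"
  shows "prob {x\<in>space M. (\<Sum>i\<in>I. X i x) \<ge> real (card I) * d} \<le> exp (- (real (card I) * d\<^sup>2 / (2*\<sigma>)))"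
proof (cases "d = 0")
  case True
  then show ?thesis by simp
next
  case False
  with d have d: "d > 0" by auto
  define l where "l = d / \<sigma>"
  have l: "l > 0" using d \<sigma> by (simp add: l_def)
  have rv[measurable]: "\<And>i. i \<in> I \<Longrightarrow> X i \<in> borel_measurable M"
    using ind unfolding indep_vars_def by auto
  have "ennreal (prob {x\<in>space M. (\<Sum>i\<in>I. X i x) \<ge> real (card I) * d}) = emeasure M {x\<in>space M. (\<Sum>i\<in>I. X i x) \<ge> real (card I) * d}"
    by (simp add: emeasure_eq_measure)
  also have "\<dots> \<le> ennreal (exp (-l*(real (card I) * d))) * (\<integral>\<^sup>+x\<in>space M. exp (l * (\<Sum>i\<in>I. X i x)) \<partial>M)"
    by (intro Chernoff_ineq_nn_integral_ge l) (auto intro!: borel_measurable_sum rv)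
  also have "(\<integral>\<^sup>+x\<in>space M. exp (l * (\<Sum>i\<in>I. X i x)) \<partial>M) = (\<integral>\<^sup>+x. (\<Prod>i\<in>I. ennreal (exp (l * X i x))) \<partial>M)"
    by (intro nn_integral_cong)
       (simp_all add: sum_distrib_left exp_sum fin prod_ennreal)
  also have "\<dots> = (\<Prod>i\<in>I. \<integral>\<^sup>+x. ennreal (exp (l * X i x)) \<partial>M)"
    by (intro indep_vars_nn_integral fin indep_vars_compose2[OF ind]) auto
  also have "ennreal (exp (-l*(real (card I) * d))) * \<dots> \<le>
               ennreal (exp (-l*(real (card I) * d))) * (\<Prod>i\<in>I. ennreal (exp (l\<^sup>2 * \<sigma> / 2)))"
    by (intro mult_left_mono prod_mono_ennreal mgf) auto
  also have "\<dots> = ennreal (exp (-l*(real (card I) * d)) * exp (l\<^sup>2 * \<sigma> / 2) ^ card I)"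
    by (simp add: prod_ennreal ennreal_mult ennreal_power)
  also have "exp (-l*(real (card I) * d)) * exp (l\<^sup>2 * \<sigma> / 2) ^ card I = exp (real (card I) * (l\<^sup>2 * \<sigma> / 2 - l * d))"
    by (simp add: exp_of_nat_mult[symmetric] exp_add[symmetric] algebra_simps)
  also have "real (card I) * (l\<^sup>2 * \<sigma> / 2 - l * d) = - (real (card I) * d\<^sup>2 / (2*\<sigma>))"
    using \<sigma> by (simp add: l_def field_simps power2_eq_square)
  finally show ?thesis
    by (subst (asm) ennreal_le_iff) simp_all
qed



lemma (in prob_space) bounded_mgf:
  fixes f :: "'a \<Rightarrow> real"
  assumes [measurable]: "f \<in> borel_measurable M" and bnd: "\<And>x. x \<in> space M \<Longrightarrow> f x \<in> {a..b}"
  shows "(\<integral>\<^sup>+x. ennreal (exp (s * (f x - expectation f))) \<partial>M) \<le> ennreal (exp (s\<^sup>2 * ((b-a)\<^sup>2/4) / 2))"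
proof -
  consider "s > 0" | "s = 0" | "s < 0" by linarith
  then show ?thesis
  proof cases
    case 1
    interpret interval_bounded_random_variable M f a b
      by unfold_locales (use bnd in auto)
    show ?thesis using Hoeffdings_lemma_nn_integral[OF 1]
      by (simp add: power2_eq_square field_simps)
  next
    case 2
    then show ?thesis by (simp add: emeasure_space_1)
  next
    case 3
    interpret interval_bounded_random_variable M "\<lambda>x. - f x" "-b" "-a"
      by unfold_locales (use bnd in auto)
    have "(\<integral>\<^sup>+x. ennreal (exp (s * (f x - expectation f))) \<partial>M) =
          (\<integral>\<^sup>+x. ennreal (exp ((-s) * (- f x - expectation (\<lambda>x. - f x)))) \<partial>M)"
      by (simp add: algebra_simps)
    also have "\<dots> \<le> ennreal (exp ((-s)\<^sup>2 * (-a - -b)\<^sup>2 / 8))"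
      using 3 by (intro Hoeffdings_lemma_nn_integral) auto
    finally show ?thesis
      by (simp add: power2_eq_square field_simps)
  qed
qed



definition Vf :: "(nat \<Rightarrow> nat \<Rightarrow> 'a \<Rightarrow> bool) \<Rightarrow> (nat \<Rightarrow> nat \<Rightarrow> 'a \<Rightarrow> real) \<Rightarrow> (nat \<times> nat) + (nat \<times> nat) \<Rightarrow> 'a \<Rightarrow> real" where
  "Vf A \<nu> = (\<lambda>i \<omega>. case i of Inl (t, k) \<Rightarrow> of_bool (A t k \<omega>) | Inr (t, k) \<Rightarrow> \<nu> t k \<omega>)"

locale ene = prob_space M for M :: "'a measure" +
  fixes N n :: nat and U b :: real and A :: "nat \<Rightarrow> nat \<Rightarrow> 'a \<Rightarrow> bool" and \<nu> :: "nat \<Rightarrow> nat \<Rightarrow> 'a \<Rightarrow> real"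
  assumes n: "n < N" and U: "0 < U"
    and indep: "indep_vars (\<lambda>_. borel) (Vf A \<nu>)
        {i. case i of Inl (t, k) \<Rightarrow> k < N | Inr (t, k) \<Rightarrow> k < N}"
    and access: "\<And>t k. k < N \<Longrightarrow> prob {\<omega> \<in> space M. A t k \<omega>} = 1 / 2"
    and noise: "\<And>t k. k < N \<Longrightarrow> subgaussian M (\<nu> t k) b"
begin

abbreviation "J \<equiv> {i. case i of Inl (t, k) \<Rightarrow> k < N | Inr (t, k) \<Rightarrow> k < (N::nat)}"

lemma rv_V: "i \<in> J \<Longrightarrow> Vf A \<nu> i \<in> borel_measurable M"
  using indep unfolding indep_vars_def by auto

lemma meas_A[measurable]: "k < N \<Longrightarrow> Measurable.pred M (A t k)"
proof -
  assume k: "k < N"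
  have "(\<lambda>\<omega>. of_bool (A t k \<omega>) :: real) \<in> borel_measurable M"
    using rv_V[of "Inl (t,k)"] k by (simp add: Vf_def)
  from measurable_sets[OF this, of "{1}"]
  have "{\<omega> \<in> space M. A t k \<omega>} \<in> sets M"
    by (simp add: vimage_def Int_def conj_commute)
  then show ?thesis unfolding pred_def .
qed

lemma meas_nu[measurable]: "k < N \<Longrightarrow> \<nu> t k \<in> borel_measurable M"
  using rv_V[of "Inr (t,k)"] by (simp add: Vf_def)

lemma b_nonneg: "b \<ge> 0"
proof -
  have sg: "subgaussian M (\<nu> 0 n) b" using noise n by auto
  then have int: "integrable M (\<lambda>\<omega>. exp (1 * \<nu> 0 n \<omega>))" "integrable M (\<nu> 0 n)"
     "integral\<^sup>L M (\<nu> 0 n) = 0"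
    "integral\<^sup>L M (\<lambda>\<omega>. exp (1 * \<nu> 0 n \<omega>)) \<le> exp (1\<^sup>2 * b / 2)"
    unfolding subgaussian_def by blast+
  have "integral\<^sup>L M (\<lambda>\<omega>. 1 + \<nu> 0 n \<omega>) \<le> integral\<^sup>L M (\<lambda>\<omega>. exp (1 * \<nu> 0 n \<omega>))"
    by (intro integral_mono) (use int in \<open>auto simp: exp_ge_add_one_self\<close>)
  moreover have "integral\<^sup>L M (\<lambda>\<omega>. 1 + \<nu> 0 n \<omega>) = 1"
    using int by (simp add: prob_space)
  ultimately have "1 \<le> exp (1\<^sup>2 * b / 2)" using int by linarith
  then have "exp 0 \<le> exp (b / 2)" by simp
  then have "0 \<le> b / 2" by (simp only: exp_le_cancel_iff)
  then show ?thesis by simp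
qed

lemma prob_A_not: "k < N \<Longrightarrow> prob {\<omega> \<in> space M. \<not> A t k \<omega>} = 1 / 2"
proof -
  assume k: "k < N"
  have "{\<omega> \<in> space M. \<not> A t k \<omega>} = space M - {\<omega> \<in> space M. A t k \<omega>}" by auto
  then show ?thesis using prob_compl[of "{\<omega> \<in> space M. A t k \<omega>}"] access[OF k] k by simp
qed

lemma prob_config:
  assumes S: "S \<subseteq> {..<N}"
  shows "prob {\<omega> \<in> space M. {k. k < N \<and> A t k \<omega>} = S} = (1/2)^N"
proof -
  define Ii :: "((nat \<times> nat) + (nat \<times> nat)) set" where "Ii = (\<lambda>k. Inl (t, k)) ` {..<N}"
  define B :: "(nat \<times> nat) + (nat \<times> nat) \<Rightarrow> real set" where "B = (\<lambda>i. case i of Inl (t', k) \<Rightarrow> {of_bool (k \<in> S)} | Inr _ \<Rightarrow> {})"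
  have Ine: "Ii \<noteq> {}" using n by (auto simp: Ii_def)
  have "prob (\<Inter>i\<in>Ii. Vf A \<nu> i -` B i \<inter> space M) = (\<Prod>i\<in>Ii. prob (Vf A \<nu> i -` B i \<inter> space M))"
    by (rule indep_varsD[OF indep Ine]) (auto simp: Ii_def B_def)
  also have "\<dots> = (\<Prod>k<N. prob (Vf A \<nu> (Inl (t,k)) -` B (Inl (t,k)) \<inter> space M))"
    unfolding Ii_def by (subst prod.reindex) (auto simp: inj_on_def)
  also have "\<dots> = (\<Prod>k<N. 1/2)"
  proof (rule prod.cong)
    fix k assume "k \<in> {..<N}"
    then have k: "k < N" by simp
    show "prob (Vf A \<nu> (Inl (t,k)) -` B (Inl (t,k)) \<inter> space M) = 1/2"
    proof (cases "k \<in> S")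
      case True
      then have "Vf A \<nu> (Inl (t,k)) -` B (Inl (t,k)) \<inter> space M = {\<omega> \<in> space M. A t k \<omega>}"
        by (auto simp: Vf_def B_def)
      then show ?thesis using access[OF k] by simp
    next
      case False
      then have "Vf A \<nu> (Inl (t,k)) -` B (Inl (t,k)) \<inter> space M = {\<omega> \<in> space M. \<not> A t k \<omega>}"
        by (auto simp: Vf_def B_def)
      then show ?thesis using prob_A_not[OF k] by simp
    qed
  qed simp
  also have "(\<Inter>i\<in>Ii. Vf A \<nu> i -` B i \<inter> space M) = {\<omega> \<in> space M. {k. k < N \<and> A t k \<omega>} = S}"
    proof (intro equalityI subsetI)
    fix \<omega> assume "\<omega> \<in> (\<Inter>i\<in>Ii. Vf A \<nu> i -` B i \<inter> space M)"
    then have "\<And>k. k < N \<Longrightarrow> of_bool (A t k \<omega>) = (of_bool (k \<in> S)::real)" "\<omega> \<in> space M"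
      using Ine by (auto simp: Ii_def B_def Vf_def)
    then have "\<And>k. k < N \<Longrightarrow> A t k \<omega> = (k \<in> S)" "\<omega> \<in> space M" by (simp_all only: of_bool_eq_iff)
    then show "\<omega> \<in> {\<omega> \<in> space M. {k. k < N \<and> A t k \<omega>} = S}" using S by auto
  qed (auto simp: Ii_def B_def Vf_def)
  finally show ?thesis by simp
qed

lemma sets_config: "{\<omega> \<in> space M. {k. k < N \<and> A t k \<omega>} = S} \<in> sets M"
proof -
  have "{\<omega> \<in> space M. {k. k < N \<and> A t k \<omega>} = S} = {\<omega> \<in> space M. (\<forall>k\<in>{..<N}. A t k \<omega> = (k \<in> S)) \<and> S \<subseteq> {..<N}}"
    by auto
  also have "\<dots> \<in> sets M" by measurable
  finally show ?thesis .
qed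

lemma config_sum:
  fixes G :: "nat set \<Rightarrow> real"
  assumes "\<omega> \<in> space M"
  shows "G {k. k < N \<and> A t k \<omega>} = (\<Sum>S\<in>Pow {..<N}. G S * indicator {\<omega> \<in> space M. {k. k < N \<and> A t k \<omega>} = S} \<omega>)"
proof -
  have "(\<Sum>S\<in>Pow {..<N}. G S * indicator {\<omega> \<in> space M. {k. k < N \<and> A t k \<omega>} = S} \<omega>)
      = (\<Sum>S\<in>{{k. k < N \<and> A t k \<omega>}}. G S * indicator {\<omega> \<in> space M. {k. k < N \<and> A t k \<omega>} = S} \<omega>)"
  proof (rule sum.mono_neutral_right)
    show "\<forall>S\<in>Pow {..<N} - {{k. k < N \<and> A t k \<omega>}}. G S * indicator {\<omega> \<in> space M. {k. k < N \<and> A t k \<omega>} = S} \<omega> = 0"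
    proof
      fix S assume "S \<in> Pow {..<N} - {{k. k < N \<and> A t k \<omega>}}"
      then have "{k. k < N \<and> A t k \<omega>} \<noteq> S" by auto
      then show "G S * indicator {\<omega> \<in> space M. {k. k < N \<and> A t k \<omega>} = S} \<omega> = 0"
        by (simp add: indicator_def)
    qed
  qed auto
  then show ?thesis using assms by simp
qed

lemma config_meas[measurable]:
  fixes G :: "nat set \<Rightarrow> real"
  shows "(\<lambda>\<omega>. G {k. k < N \<and> A t k \<omega>} :: real) \<in> borel_measurable M"
proof -
  have "(\<lambda>\<omega>. (\<Sum>S\<in>Pow {..<N}. G S * indicator {\<omega> \<in> space M. {k. k < N \<and> A t k \<omega>} = S} \<omega>)) \<in> borel_measurable M"
    using sets_config by measurable
  then show ?thesis by (rule measurable_cong[THEN iffD1, rotated]) (simp add: config_sum)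
qed

lemma config_integral:
  fixes G :: "nat set \<Rightarrow> real"
  shows "(\<integral>\<omega>. G {k. k < N \<and> A t k \<omega>} \<partial>M) = (1/2)^N * (\<Sum>S\<in>Pow {..<N}. G S :: real)"
proof -
  have "(\<integral>\<omega>. G {k. k < N \<and> A t k \<omega>} \<partial>M) = (\<integral>\<omega>. (\<Sum>S\<in>Pow {..<N}. G S * indicator {\<omega> \<in> space M. {k. k < N \<and> A t k \<omega>} = S} \<omega>) \<partial>M)"
    by (rule Bochner_Integration.integral_cong) (simp_all add: config_sum)
  also have "\<dots> = (\<Sum>S\<in>Pow {..<N}. G S * prob {\<omega> \<in> space M. {k. k < N \<and> A t k \<omega>} = S})"
  proof -
    have "\<And>S. integrable M (indicat_real {\<omega> \<in> space M. {k. k < N \<and> A t k \<omega>} = S})"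
      by (intro integrable_real_indicator sets_config) (simp add: emeasure_eq_measure)
    then show ?thesis
    by (subst Bochner_Integration.integral_sum) (auto intro!: integrable_real_mult_indicator sets_config simp: sets_config integrable_real_indicator)
  qed
  also have "\<dots> = (\<Sum>S\<in>Pow {..<N}. G S * (1/2)^N)"
    by (intro sum.cong) (auto simp: prob_config)
  finally show ?thesis by (simp add: sum_distrib_right mult.commute)
qed

definition K :: "nat \<Rightarrow> ((nat \<times> nat) + (nat \<times> nat)) set" where
  "K t = (\<lambda>k. Inl (t, k)) ` {..<N} \<union> {Inr (t, n)}"

definition Phi :: "nat \<Rightarrow> 'a \<Rightarrow> ((nat \<times> nat) + (nat \<times> nat)) \<Rightarrow> real" where
  "Phi t \<omega> = restrict (\<lambda>i. Vf A \<nu> i \<omega>) (K t)"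

lemma K_sub: "K t \<subseteq> J" using n by (auto simp: K_def)

lemma indep_Phi: "indep_vars (\<lambda>t. PiM (K t) (\<lambda>_. borel)) Phi UNIV"
  unfolding Phi_def
  by (rule indep_vars_restrict[OF indep]) (use n in \<open>auto simp: K_sub disjoint_family_on_def K_def\<close>)

lemma indep_G:
  assumes "\<And>t. t \<in> I \<Longrightarrow> G t \<in> borel_measurable (PiM (K t) (\<lambda>_. borel))"
  shows "indep_vars (\<lambda>_. borel) (\<lambda>t \<omega>. G t (Phi t \<omega>)) I"
  by (rule indep_vars_compose2[OF indep_vars_subset[OF indep_Phi]]) (use assms in auto)

definition fa :: "nat \<Rightarrow> (((nat \<times> nat) + (nat \<times> nat)) \<Rightarrow> real) \<Rightarrow> real" where
  "fa t x = x (Inl (t, n))"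
definition fy :: "nat \<Rightarrow> (((nat \<times> nat) + (nat \<times> nat)) \<Rightarrow> real) \<Rightarrow> real" where
  "fy t x = x (Inl (t, n)) * U / (\<Sum>k<N. x (Inl (t, k)))"
definition fz :: "nat \<Rightarrow> (((nat \<times> nat) + (nat \<times> nat)) \<Rightarrow> real) \<Rightarrow> real" where
  "fz t x = x (Inl (t, n)) * x (Inr (t, n))"

lemma fa_meas[measurable]: "fa t \<in> borel_measurable (PiM (K t) (\<lambda>_. borel))"
  unfolding fa_def using n by (intro measurable_component_singleton) (auto simp: K_def)
lemma fz_meas[measurable]: "fz t \<in> borel_measurable (PiM (K t) (\<lambda>_. borel))"
proof -
  have "(\<lambda>x. x (Inr (t, n)) :: real) \<in> borel_measurable (PiM (K t) (\<lambda>_. borel))"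
    by (intro measurable_component_singleton) (auto simp: K_def)
  then show ?thesis using fa_meas[of t] unfolding fz_def fa_def by measurable
qed
lemma fy_meas[measurable]: "fy t \<in> borel_measurable (PiM (K t) (\<lambda>_. borel))"
proof -
  have 1: "(\<lambda>x. \<Sum>k<N. x (Inl (t, k)) :: real) \<in> borel_measurable (PiM (K t) (\<lambda>_. borel))"
  proof (rule borel_measurable_sum)
    fix k assume "k \<in> {..<N}"
    then show "(\<lambda>x. x (Inl (t, k)) :: real) \<in> borel_measurable (PiM (K t) (\<lambda>_. borel))"
      by (intro measurable_component_singleton) (auto simp: K_def)
  qed
  have 2: "(\<lambda>x. x (Inl (t, n)) :: real) \<in> borel_measurable (PiM (K t) (\<lambda>_. borel))"
    using fa_meas[of t] unfolding fa_def .
  have "(\<lambda>x. x (Inl (t, n)) * U / (\<Sum>k<N. x (Inl (t, k)))) \<in> borel_measurable (PiM (K t) (\<lambda>_. borel))"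
    by (intro borel_measurable_divide borel_measurable_times 1 2 borel_measurable_const)
  then show ?thesis unfolding fy_def .
qed

definition a :: "nat \<Rightarrow> 'a \<Rightarrow> real" where "a t \<omega> = of_bool (A t n \<omega>)"
definition y :: "nat \<Rightarrow> 'a \<Rightarrow> real" where "y t \<omega> = a t \<omega> * U / real (load N A t \<omega>)"
definition z :: "nat \<Rightarrow> 'a \<Rightarrow> real" where "z t \<omega> = a t \<omega> * \<nu> t n \<omega>"

lemma load_sum: "real (load N A t \<omega>) = (\<Sum>k<N. of_bool (A t k \<omega>))"
proof -
  have "load N A t \<omega> = card {k \<in> {..<N}. A t k \<omega>}" unfolding load_def by (rule arg_cong[where f=card]) auto
  then have "real (load N A t \<omega>) = (\<Sum>k\<in>{k \<in> {..<N}. A t k \<omega>}. 1)" by simp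
  also have "\<dots> = (\<Sum>k<N. if A t k \<omega> then 1 else 0)" by (rule sum.inter_filter) simp
  also have "\<dots> = (\<Sum>k<N. of_bool (A t k \<omega>))" by (intro sum.cong) auto
  finally show ?thesis .
qed

lemma a_Phi: "a t = (\<lambda>\<omega>. fa t (Phi t \<omega>))"
  using n by (auto simp: a_def fa_def Phi_def K_def Vf_def fun_eq_iff)
lemma z_Phi: "z t = (\<lambda>\<omega>. fz t (Phi t \<omega>))"
  using n by (auto simp: z_def a_def fz_def Phi_def K_def Vf_def fun_eq_iff)
lemma y_Phi: "y t = (\<lambda>\<omega>. fy t (Phi t \<omega>))"
proof -
  have "\<And>\<omega>. (\<Sum>k<N. Phi t \<omega> (Inl (t, k))) = (\<Sum>k<N. of_bool (A t k \<omega>))"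
    by (intro sum.cong) (auto simp: Phi_def K_def Vf_def)
  then show ?thesis
    using n by (auto simp: y_def a_def fy_def load_sum fun_eq_iff Phi_def K_def Vf_def)
qed

lemma a_meas[measurable]: "a t \<in> borel_measurable M"
  unfolding a_def using n by measurable
lemma z_meas[measurable]: "z t \<in> borel_measurable M"
  unfolding z_def using n by measurable
lemma y_meas[measurable]: "y t \<in> borel_measurable M"
proof -
  have "y t = (\<lambda>\<omega>. (\<lambda>S. of_bool (n \<in> S) * U / real (card S)) {k. k < N \<and> A t k \<omega>})"
    using n by (auto simp: y_def a_def load_def fun_eq_iff)
  then show ?thesis by simp
qed

end

context ene begin

lemma a_01: "a t \<omega> = 0 \<or> a t \<omega> = 1" by (simp add: a_def)
lemma a_bnd: "a t \<omega> \<in> {0..1}" by (simp add: a_def)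

lemma a_integrable[intro]: "integrable M (a t)"
  by (rule integrable_const_bound[where B=1]) (auto simp: a_def)

lemma E_a: "expectation (a t) = 1/2"
proof -
  have "expectation (a t) = expectation (indicator {\<omega> \<in> space M. A t n \<omega>})"
    by (rule Bochner_Integration.integral_cong) (auto simp: a_def indicator_def)
  also have "\<dots> = prob {\<omega> \<in> space M. A t n \<omega>}"
    by (simp add: Int_absorb2 subsetI)
  finally show ?thesis using access[OF n] by simp
qed

definition q :: real where
  "q = (1/2)^N * (\<Sum>S\<in>Pow {..<N}. of_bool (n \<in> S) * U / real (card S))"

lemma y_config: "y t \<omega> = (\<lambda>S. of_bool (n \<in> S) * U / real (card S)) {k. k < N \<and> A t k \<omega>}"
  using n by (auto simp: y_def a_def load_def)

lemma E_y: "expectation (y t) = q"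
  unfolding y_config q_def by (rule config_integral)

lemma q_pos: "q > 0"
proof -
  have "(\<Sum>S\<in>Pow {..<N}. of_bool (n \<in> S) * U / real (card S)) \<ge> (\<Sum>S\<in>{{n}}. of_bool (n \<in> S) * U / real (card S))"
    using n U by (intro sum_mono2) auto
  then show ?thesis using U by (simp add: q_def)
qed

lemma y_bnd: "y t \<omega> \<in> {0..U}"
proof (cases "A t n \<omega>")
  case True
  then have "n \<in> {k. k < N \<and> A t k \<omega>}" using n by auto
  then have "card {n} \<le> card {k. k < N \<and> A t k \<omega>}"
    by (intro card_mono) auto
  then have "card {k. k < N \<and> A t k \<omega>} \<ge> 1" by simp
  then have "real (load N A t \<omega>) \<ge> 1" by (simp add: load_def)
  then show ?thesis using True U by (auto simp: y_def a_def field_simps)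
qed (use U in \<open>auto simp: y_def a_def\<close>)

lemma y_integrable[intro]: "integrable M (y t)"
  by (rule integrable_const_bound[where B=U]) (use y_bnd U in \<open>auto simp: abs_le_iff\<close>)

definition c :: real where "c = 2 * q"
definition W :: "nat \<Rightarrow> 'a \<Rightarrow> real" where "W t \<omega> = y t \<omega> - c * a t \<omega>"

lemma W_meas[measurable]: "W t \<in> borel_measurable M" unfolding W_def by measurable
lemma W_bnd: "W t \<omega> \<in> {-c..U}"
  using y_bnd[of t \<omega>] a_01[of t \<omega>] q_pos U by (auto simp: W_def c_def)
lemma W_integrable[intro]: "integrable M (W t)"
  unfolding W_def by (intro Bochner_Integration.integrable_diff integrable_mult_right) auto
lemma E_W: "expectation (W t) = 0"
  unfolding W_def
  by (simp add: Bochner_Integration.integral_diff[OF y_integrable integrable_mult_right[OF a_integrable]] E_y E_a c_def)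
lemma W_Phi: "W t = (\<lambda>\<omega>. fy t (Phi t \<omega>) - c * fa t (Phi t \<omega>))"
  unfolding W_def y_Phi a_Phi ..

lemma indep_a_nu: "indep_var borel (a t) borel (\<nu> t n)"
proof -
  have "indep_var (PiM {Inl (t,n)} (\<lambda>_. borel)) (\<lambda>\<omega>. restrict (\<lambda>i. Vf A \<nu> i \<omega>) {Inl (t,n)})
                  (PiM {Inr (t,n)} (\<lambda>_. borel)) (\<lambda>\<omega>. restrict (\<lambda>i. Vf A \<nu> i \<omega>) {Inr (t,n)})"
    by (rule indep_var_restrict[OF indep]) (use n in auto)
  then have "indep_var borel ((\<lambda>x. x (Inl (t,n))) \<circ> (\<lambda>\<omega>. restrict (\<lambda>i. Vf A \<nu> i \<omega>) {Inl (t,n)}))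
                  borel ((\<lambda>x. x (Inr (t,n))) \<circ> (\<lambda>\<omega>. restrict (\<lambda>i. Vf A \<nu> i \<omega>) {Inr (t,n)}))"
    by (rule indep_var_compose) (auto intro!: measurable_component_singleton)
  also have "((\<lambda>x. x (Inl (t,n))) \<circ> (\<lambda>\<omega>. restrict (\<lambda>i. Vf A \<nu> i \<omega>) {Inl (t,n)})) = a t"
    by (auto simp: a_def Vf_def fun_eq_iff)
  also have "((\<lambda>x. x (Inr (t,n))) \<circ> (\<lambda>\<omega>. restrict (\<lambda>i. Vf A \<nu> i \<omega>) {Inr (t,n)})) = \<nu> t n"
    by (auto simp: Vf_def fun_eq_iff)
  finally show ?thesis .
qed

lemma nu_integrable[intro]: "integrable M (\<nu> t n)"
  using noise[OF n] unfolding subgaussian_def by blast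

lemma E_nu: "expectation (\<nu> t n) = 0"
  using noise[OF n] unfolding subgaussian_def by blast

lemma z_integrable[intro]: "integrable M (z t)"
  unfolding z_def by (rule indep_var_integrable[OF indep_a_nu]) auto

lemma E_z: "expectation (z t) = 0"
  unfolding z_def by (subst indep_var_lebesgue_integral[OF indep_a_nu]) (auto simp: E_nu)

lemma z_mgf: "(\<integral>\<^sup>+\<omega>. ennreal (exp (s * z t \<omega>)) \<partial>M) \<le> ennreal (exp (s\<^sup>2 * (b + 1) / 2))"
proof -
  have sg: "integrable M (\<lambda>\<omega>. exp (s * \<nu> t n \<omega>))" "expectation (\<lambda>\<omega>. exp (s * \<nu> t n \<omega>)) \<le> exp (s\<^sup>2 * b / 2)"
    using noise[OF n] unfolding subgaussian_def by blast+
  have ind2: "indep_var borel (a t) borel (\<lambda>\<omega>. exp (s * \<nu> t n \<omega>))"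
  proof -
    have "indep_var borel ((\<lambda>x. x) \<circ> a t) borel ((\<lambda>x. exp (s * x)) \<circ> \<nu> t n)"
      by (rule indep_var_compose[OF indep_a_nu]) auto
    then show ?thesis by (simp add: comp_def)
  qed
  have eq: "(\<lambda>\<omega>. exp (s * z t \<omega>)) = (\<lambda>\<omega>. (1 - a t \<omega>) + a t \<omega> * exp (s * \<nu> t n \<omega>))"
  proof
    fix \<omega> show "exp (s * z t \<omega>) = (1 - a t \<omega>) + a t \<omega> * exp (s * \<nu> t n \<omega>)"
      using a_01[of t \<omega>] by (auto simp: z_def)
  qed
  have int1: "integrable M (\<lambda>\<omega>. a t \<omega> * exp (s * \<nu> t n \<omega>))"
    by (rule indep_var_integrable[OF ind2 a_integrable sg(1)])
  have E1: "expectation (\<lambda>\<omega>. a t \<omega> * exp (s * \<nu> t n \<omega>)) = 1/2 * expectation (\<lambda>\<omega>. exp (s * \<nu> t n \<omega>))"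
    by (subst indep_var_lebesgue_integral[OF ind2 a_integrable sg(1)]) (simp add: E_a)
  have int0: "integrable M (\<lambda>\<omega>. 1 - a t \<omega>)"
    by (intro Bochner_Integration.integrable_diff a_integrable) simp
  have E0: "expectation (\<lambda>\<omega>. 1 - a t \<omega>) = 1/2"
    by (subst Bochner_Integration.integral_diff) (auto simp: E_a prob_space)
  have int: "integrable M (\<lambda>\<omega>. exp (s * z t \<omega>))"
    unfolding eq by (rule Bochner_Integration.integrable_add[OF int0 int1])
  have "expectation (\<lambda>\<omega>. exp (s * z t \<omega>)) = 1/2 + 1/2 * expectation (\<lambda>\<omega>. exp (s * \<nu> t n \<omega>))"
    unfolding eq by (subst Bochner_Integration.integral_add[OF int0 int1]) (simp only: E0 E1)
  also have "\<dots> \<le> exp (s\<^sup>2 * (b + 1) / 2)"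
  proof -
    have "exp 0 \<le> exp (s\<^sup>2 * b / 2)" using b_nonneg by (subst exp_le_cancel_iff) simp
    then have "1 \<le> exp (s\<^sup>2 * b / 2)" by simp
    moreover have "exp (s\<^sup>2 * b / 2) \<le> exp (s\<^sup>2 * (b + 1) / 2)"
      by (subst exp_le_cancel_iff) (simp add: field_simps)
    ultimately show ?thesis using sg(2) by linarith
  qed
  finally have le: "expectation (\<lambda>\<omega>. exp (s * z t \<omega>)) \<le> exp (s\<^sup>2 * (b + 1) / 2)" .
  have "(\<integral>\<^sup>+\<omega>. ennreal (exp (s * z t \<omega>)) \<partial>M) = ennreal (expectation (\<lambda>\<omega>. exp (s * z t \<omega>)))"
    by (rule nn_integral_eq_integral[OF int]) simp
  then show ?thesis using le by (simp add: ennreal_leI)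
qed

end


lemma (in prob_space) chernoff_abs:
  fixes X :: "'i \<Rightarrow> 'a \<Rightarrow> real"
  assumes fin: "finite I" and ind: "indep_vars (\<lambda>_. borel) X I"
    and mgf: "\<And>i s. i \<in> I \<Longrightarrow> (\<integral>\<^sup>+x. ennreal (exp (s * X i x)) \<partial>M) \<le> ennreal (exp (s\<^sup>2 * \<sigma> / 2))"
    and \<sigma>: "\<sigma> > 0" and d: "d \<ge> 0"
  shows "prob {x\<in>space M. \<bar>\<Sum>i\<in>I. X i x\<bar> \<ge> real (card I) * d} \<le> 2 * exp (- (real (card I) * d\<^sup>2 / (2*\<sigma>)))"
proof -
  have rv[measurable]: "\<And>i. i \<in> I \<Longrightarrow> X i \<in> borel_measurable M"
    using ind unfolding indep_vars_def by auto
  have ind': "indep_vars (\<lambda>_. borel) (\<lambda>i x. - X i x) I"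
    by (rule indep_vars_compose2[OF ind]) auto
  have mgf': "\<And>i s. i \<in> I \<Longrightarrow> (\<integral>\<^sup>+x. ennreal (exp (s * (- X i x))) \<partial>M) \<le> ennreal (exp (s\<^sup>2 * \<sigma> / 2))"
    using mgf[of _ "-_"] by simp
  have "{x\<in>space M. \<bar>\<Sum>i\<in>I. X i x\<bar> \<ge> real (card I) * d} \<subseteq>
        {x\<in>space M. (\<Sum>i\<in>I. X i x) \<ge> real (card I) * d} \<union> {x\<in>space M. (\<Sum>i\<in>I. - X i x) \<ge> real (card I) * d}"
    by (auto simp: sum_negf abs_le_iff)
  then have "prob {x\<in>space M. \<bar>\<Sum>i\<in>I. X i x\<bar> \<ge> real (card I) * d} \<le>
        prob ({x\<in>space M. (\<Sum>i\<in>I. X i x) \<ge> real (card I) * d} \<union> {x\<in>space M. (\<Sum>i\<in>I. - X i x) \<ge> real (card I) * d})"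
    by (intro finite_measure_mono) auto
  also have "\<dots> \<le> prob {x\<in>space M. (\<Sum>i\<in>I. X i x) \<ge> real (card I) * d} + prob {x\<in>space M. (\<Sum>i\<in>I. - X i x) \<ge> real (card I) * d}"
    by (intro measure_Un_le) auto
  also have "\<dots> \<le> exp (- (real (card I) * d\<^sup>2 / (2*\<sigma>))) + exp (- (real (card I) * d\<^sup>2 / (2*\<sigma>)))"
    by (intro add_mono chernoff_subg[OF fin ind mgf \<sigma> d] chernoff_subg[OF fin ind' mgf' \<sigma> d])
  finally show ?thesis by simp
qed

context ene begin

lemma indep_a: "indep_vars (\<lambda>_. borel) a I"
proof -
  have "(\<lambda>t \<omega>. fa t (Phi t \<omega>)) = a" by (intro ext) (simp add: a_Phi)
  then show ?thesis using indep_G[of I "\<lambda>t. fa t"] by simp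
qed
lemma indep_W: "indep_vars (\<lambda>_. borel) W I"
proof -
  have "(\<lambda>t \<omega>. fy t (Phi t \<omega>) - c * fa t (Phi t \<omega>)) = W" by (intro ext) (simp add: W_Phi)
  then show ?thesis using indep_G[of I "\<lambda>t x. fy t x - c * fa t x"] by simp
qed
lemma indep_z: "indep_vars (\<lambda>_. borel) z I"
proof -
  have "(\<lambda>t \<omega>. fz t (Phi t \<omega>)) = z" by (intro ext) (simp add: z_Phi)
  then show ?thesis using indep_G[of I "\<lambda>t. fz t"] by simp
qed

definition R :: "nat set \<Rightarrow> nat \<Rightarrow> 'a \<Rightarrow> real" where
  "R I t \<omega> = (\<Sum>s\<in>I-{t}. a s \<omega>)"

lemma R_meas[measurable]: "R I t \<in> borel_measurable M"
  unfolding R_def by measurable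

lemma R_nonneg: "R I t \<omega> \<ge> 0"
  unfolding R_def by (intro sum_nonneg) (auto simp: a_def)

lemma h_bnd: "0 \<le> 1 / (1 + R I t \<omega>)" "1 / (1 + R I t \<omega>) \<le> 1"
  using R_nonneg[of I t \<omega>] by (auto simp: field_simps)

lemma indep_R:
  assumes fin: "finite I" and t: "t \<in> I"
    and G: "G \<in> borel_measurable (PiM (K t) (\<lambda>_. borel))"
  shows "indep_var borel (\<lambda>\<omega>. G (Phi t \<omega>)) borel (R I t)"
proof -
  define G' where "G' s = (if s = t then G else fa s)" for s
  have ind: "indep_vars (\<lambda>_. borel) (\<lambda>s \<omega>. G' s (Phi s \<omega>)) (insert t (I - {t}))"
    by (rule indep_G) (use G in \<open>auto simp: G'_def\<close>)
  have "indep_var borel ((\<lambda>s \<omega>. G' s (Phi s \<omega>)) t) borel (\<lambda>\<omega>. \<Sum>s\<in>I - {t}. (\<lambda>s \<omega>. G' s (Phi s \<omega>)) s \<omega>)"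
    by (rule indep_vars_sum) (use fin ind in auto)
  moreover have "(\<lambda>\<omega>. \<Sum>s\<in>I - {t}. (\<lambda>s \<omega>. G' s (Phi s \<omega>)) s \<omega>) = R I t"
    by (auto simp: R_def G'_def a_Phi fun_eq_iff intro!: sum.cong)
  ultimately show ?thesis by (simp add: G'_def)
qed

lemma trick:
  assumes fin: "finite I" and t: "t \<in> I"
    and G: "G \<in> borel_measurable (PiM (K t) (\<lambda>_. borel))"
    and int: "integrable M (\<lambda>\<omega>. G (Phi t \<omega>))"
  shows "integrable M (\<lambda>\<omega>. G (Phi t \<omega>) * (1 / (1 + R I t \<omega>)))"
    and "expectation (\<lambda>\<omega>. G (Phi t \<omega>) * (1 / (1 + R I t \<omega>))) = expectation (\<lambda>\<omega>. G (Phi t \<omega>)) * expectation (\<lambda>\<omega>. 1 / (1 + R I t \<omega>))"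
proof -
  have ind: "indep_var borel ((\<lambda>x. x) \<circ> (\<lambda>\<omega>. G (Phi t \<omega>))) borel ((\<lambda>r. 1 / (1 + r)) \<circ> R I t)"
    by (rule indep_var_compose[OF indep_R[OF fin t G]]) auto
  then have ind': "indep_var borel (\<lambda>\<omega>. G (Phi t \<omega>)) borel (\<lambda>\<omega>. 1 / (1 + R I t \<omega>))"
    by (simp add: comp_def)
  have inth: "integrable M (\<lambda>\<omega>. 1 / (1 + R I t \<omega>))"
    by (rule integrable_const_bound[where B=1]) (use h_bnd in auto)
  show "integrable M (\<lambda>\<omega>. G (Phi t \<omega>) * (1 / (1 + R I t \<omega>)))"
    by (rule indep_var_integrable[OF ind' int inth])
  show "expectation (\<lambda>\<omega>. G (Phi t \<omega>) * (1 / (1 + R I t \<omega>))) = expectation (\<lambda>\<omega>. G (Phi t \<omega>)) * expectation (\<lambda>\<omega>. 1 / (1 + R I t \<omega>))"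
    by (rule indep_var_lebesgue_integral[OF ind' int inth])
qed

end


context ene begin

definition SX :: "nat \<Rightarrow> 'a \<Rightarrow> real" where "SX T \<omega> = (\<Sum>t<T. a t \<omega>)"

lemma SX_meas[measurable]: "SX T \<in> borel_measurable M" unfolding SX_def by measurable

lemma y_a0: "a t \<omega> = 0 \<Longrightarrow> y t \<omega> = 0" by (simp add: y_def)
lemma z_a0: "a t \<omega> = 0 \<Longrightarrow> z t \<omega> = 0" by (simp add: z_def)
lemma W_a0: "a t \<omega> = 0 \<Longrightarrow> W t \<omega> = 0" by (simp add: W_def y_def)

lemma term_eq:
  assumes t: "t < T"
  shows "(W t \<omega> + z t \<omega>) * (1 / (1 + R {..<T} t \<omega>)) = (W t \<omega> + z t \<omega>) / SX T \<omega>"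
proof -
  have "SX T \<omega> = a t \<omega> + R {..<T} t \<omega>"
    unfolding SX_def R_def using t by (subst sum.remove[of _ t]) auto
  then show ?thesis using a_01[of t \<omega>] W_a0[of t \<omega>] z_a0[of t \<omega>] by auto
qed

lemma rbar_eq:
  "rbar N n U A \<nu> j \<omega> = c * of_bool (SX (steps_upto j) \<omega> \<noteq> 0) +
     (\<Sum>t<steps_upto j. (W t \<omega> + z t \<omega>) * (1 / (1 + R {..<steps_upto j} t \<omega>)))"
proof -
  define T where "T = steps_upto j"
  have S: "{t. t < T \<and> A t n \<omega>} = {t \<in> {..<T}. A t n \<omega>}" by auto
  have sum1: "(\<Sum>t\<in>{t. t < T \<and> A t n \<omega>}. U / real (load N A t \<omega>) + \<nu> t n \<omega>) = (\<Sum>t<T. y t \<omega> + z t \<omega>)"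
  proof -
    have "(\<Sum>t\<in>{t. t < T \<and> A t n \<omega>}. U / real (load N A t \<omega>) + \<nu> t n \<omega>)
        = (\<Sum>t<T. if A t n \<omega> then U / real (load N A t \<omega>) + \<nu> t n \<omega> else 0)"
      unfolding S by (rule sum.inter_filter) simp
    also have "\<dots> = (\<Sum>t<T. y t \<omega> + z t \<omega>)"
      by (intro sum.cong) (auto simp: y_def z_def a_def)
    finally show ?thesis .
  qed
  have card1: "real (card {t. t < T \<and> A t n \<omega>}) = SX T \<omega>"
  proof -
    have "real (card {t. t < T \<and> A t n \<omega>}) = (\<Sum>t\<in>{t \<in> {..<T}. A t n \<omega>}. 1)" unfolding S by simp
    also have "\<dots> = (\<Sum>t<T. if A t n \<omega> then 1 else 0)" by (rule sum.inter_filter) simp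
    also have "\<dots> = SX T \<omega>" unfolding SX_def by (intro sum.cong) (auto simp: a_def)
    finally show ?thesis .
  qed
  have r: "rbar N n U A \<nu> j \<omega> = (\<Sum>t<T. y t \<omega> + z t \<omega>) / SX T \<omega>"
    unfolding rbar_def Let_def T_def[symmetric] sum1 card1 ..
  have "(\<Sum>t<T. (W t \<omega> + z t \<omega>) * (1 / (1 + R {..<T} t \<omega>))) = (\<Sum>t<T. (W t \<omega> + z t \<omega>) / SX T \<omega>)"
    by (intro sum.cong refl term_eq) simp
  also have "\<dots> = ((\<Sum>t<T. y t \<omega> + z t \<omega>) - c * SX T \<omega>) / SX T \<omega>"
    by (simp add: sum_divide_distrib[symmetric] W_def sum.distrib sum_subtractf SX_def sum_distrib_left)
  finally have e: "(\<Sum>t<T. (W t \<omega> + z t \<omega>) * (1 / (1 + R {..<T} t \<omega>))) = ((\<Sum>t<T. y t \<omega> + z t \<omega>) - c * SX T \<omega>) / SX T \<omega>" .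
  show ?thesis
    unfolding T_def[symmetric] r e
    by (cases "SX T \<omega> = 0") (auto simp: field_simps)
qed

lemma E_rbar:
  "expectation (rbar N n U A \<nu> j) = c * prob {\<omega> \<in> space M. SX (steps_upto j) \<omega> \<noteq> 0}"
proof -
  define T where "T = steps_upto j"
  have tW: "integrable M (\<lambda>\<omega>. W t \<omega> * (1 / (1 + R {..<T} t \<omega>))) \<and>
       expectation (\<lambda>\<omega>. W t \<omega> * (1 / (1 + R {..<T} t \<omega>))) = 0" if t: "t < T" for t
  proof -
    have G: "(\<lambda>x. fy t x - c * fa t x) \<in> borel_measurable (PiM (K t) (\<lambda>_. borel))" by measurable
    have I: "integrable M (\<lambda>\<omega>. fy t (Phi t \<omega>) - c * fa t (Phi t \<omega>))"
      using W_integrable[of t] by (simp add: W_Phi)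
    show ?thesis unfolding W_Phi using trick[of "{..<T}" t, OF _ _ G I] t E_W[of t, unfolded W_Phi] by simp
  qed
  have tz: "integrable M (\<lambda>\<omega>. z t \<omega> * (1 / (1 + R {..<T} t \<omega>))) \<and>
       expectation (\<lambda>\<omega>. z t \<omega> * (1 / (1 + R {..<T} t \<omega>))) = 0" if t: "t < T" for t
  proof -
    have I: "integrable M (\<lambda>\<omega>. fz t (Phi t \<omega>))"
      using z_integrable[of t] by (simp add: z_Phi)
    show ?thesis unfolding z_Phi using trick[of "{..<T}" t, OF _ _ fz_meas I] t E_z[of t, unfolded z_Phi] by simp
  qed
  have intS: "integrable M (indicat_real {\<omega> \<in> space M. SX T \<omega> \<noteq> 0})"
    by (intro integrable_real_indicator) (auto simp: emeasure_eq_measure)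
  have eqf: "rbar N n U A \<nu> j \<omega> = c * indicat_real {\<omega> \<in> space M. SX T \<omega> \<noteq> 0} \<omega> +
     ((\<Sum>t<T. W t \<omega> * (1 / (1 + R {..<T} t \<omega>))) + (\<Sum>t<T. z t \<omega> * (1 / (1 + R {..<T} t \<omega>))))"
    if "\<omega> \<in> space M" for \<omega>
    using that unfolding rbar_eq T_def[symmetric] by (simp add: indicator_def sum.distrib[symmetric] distrib_right add_divide_distrib)
  have iW: "integrable M (\<lambda>\<omega>. \<Sum>t<T. W t \<omega> * (1 / (1 + R {..<T} t \<omega>)))"
    using tW by (intro Bochner_Integration.integrable_sum) auto
  have iz: "integrable M (\<lambda>\<omega>. \<Sum>t<T. z t \<omega> * (1 / (1 + R {..<T} t \<omega>)))"
    using tz by (intro Bochner_Integration.integrable_sum) auto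
  have "expectation (rbar N n U A \<nu> j) = expectation (\<lambda>\<omega>. c * indicat_real {\<omega> \<in> space M. SX T \<omega> \<noteq> 0} \<omega> +
     ((\<Sum>t<T. W t \<omega> * (1 / (1 + R {..<T} t \<omega>))) + (\<Sum>t<T. z t \<omega> * (1 / (1 + R {..<T} t \<omega>)))))"
    by (rule Bochner_Integration.integral_cong) (simp_all add: eqf)
  also have "\<dots> = c * expectation (indicat_real {\<omega> \<in> space M. SX T \<omega> \<noteq> 0}) +
     ((\<Sum>t<T. expectation (\<lambda>\<omega>. W t \<omega> * (1 / (1 + R {..<T} t \<omega>)))) + (\<Sum>t<T. expectation (\<lambda>\<omega>. z t \<omega> * (1 / (1 + R {..<T} t \<omega>)))))"
    using intS iW iz tW tz
    by (simp add: Bochner_Integration.integral_add Bochner_Integration.integral_sum Bochner_Integration.integrable_add)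
  also have "\<dots> = c * prob {\<omega> \<in> space M. SX T \<omega> \<noteq> 0}"
    using tW tz by simp
  finally show ?thesis unfolding T_def .
qed

end


context ene begin

lemma c_pos: "c > 0" using q_pos by (simp add: c_def)

lemma bound_SX: "prob {\<omega> \<in> space M. SX T \<omega> \<le> real T / 4} \<le> exp (- (real T / 8))"
proof -
  have ind: "indep_vars (\<lambda>_. borel) (\<lambda>t \<omega>. - (a t \<omega> - 1/2)) {..<T}"
    by (rule indep_vars_compose2[OF indep_a]) auto
  have mgf: "(\<integral>\<^sup>+\<omega>. ennreal (exp (s * (- (a t \<omega> - 1/2)))) \<partial>M) \<le> ennreal (exp (s\<^sup>2 * (1/4) / 2))" for t s
  proof -
    have "(\<lambda>\<omega>. ennreal (exp (s * (- (a t \<omega> - 1/2))))) = (\<lambda>\<omega>. ennreal (exp ((-s) * (a t \<omega> - expectation (a t)))))"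
      by (simp add: E_a algebra_simps)
    then show ?thesis using bounded_mgf[of "a t" 0 1 "-s"] a_bnd by simp
  qed
  have "prob {\<omega> \<in> space M. (\<Sum>t\<in>{..<T}. - (a t \<omega> - 1/2)) \<ge> real (card {..<T}) * (1/4)}
      \<le> exp (- (real (card {..<T}) * (1/4)\<^sup>2 / (2*(1/4))))"
    by (rule chernoff_subg[OF _ ind mgf]) auto
  moreover have "{\<omega> \<in> space M. (\<Sum>t\<in>{..<T}. - (a t \<omega> - 1/2)) \<ge> real (card {..<T}) * (1/4)} = {\<omega> \<in> space M. SX T \<omega> \<le> real T / 4}"
    by (auto simp: SX_def sum_negf sum_subtractf)
  ultimately show ?thesis by (simp add: power2_eq_square)
qed

definition sW :: real where "sW = (U + c)\<^sup>2 / 4"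
lemma sW_pos: "sW > 0" using U c_pos by (simp add: sW_def)

lemma bound_W: assumes "d \<ge> 0"
  shows "prob {\<omega> \<in> space M. \<bar>\<Sum>t\<in>{..<T}. W t \<omega>\<bar> \<ge> real T * d} \<le> 2 * exp (- (real T * d\<^sup>2 / (2 * sW)))"
proof -
  have mgf: "(\<integral>\<^sup>+\<omega>. ennreal (exp (s * W t \<omega>)) \<partial>M) \<le> ennreal (exp (s\<^sup>2 * sW / 2))" for t s
    using bounded_mgf[of "W t" "-c" U s] W_bnd by (simp add: E_W sW_def)
  show ?thesis using chernoff_abs[OF _ indep_W mgf sW_pos assms, of "{..<T}"] by simp
qed

lemma bound_z: assumes "d \<ge> 0"
  shows "prob {\<omega> \<in> space M. \<bar>\<Sum>t\<in>{..<T}. z t \<omega>\<bar> \<ge> real T * d} \<le> 2 * exp (- (real T * d\<^sup>2 / (2 * (b + 1))))"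
proof -
  have bp: "b + 1 > 0" using b_nonneg by simp
  show ?thesis using chernoff_abs[OF _ indep_z z_mgf bp assms, of "{..<T}"] by simp
qed

end


context ene begin

lemma rbar_good:
  assumes "SX (steps_upto j) \<omega> \<noteq> 0"
  shows "rbar N n U A \<nu> j \<omega> = c + ((\<Sum>t<steps_upto j. W t \<omega>) + (\<Sum>t<steps_upto j. z t \<omega>)) / SX (steps_upto j) \<omega>"
proof -
  define T where "T = steps_upto j"
  have "(\<Sum>t<T. (W t \<omega> + z t \<omega>) * (1 / (1 + R {..<T} t \<omega>))) = (\<Sum>t<T. (W t \<omega> + z t \<omega>) / SX T \<omega>)"
    by (intro sum.cong refl term_eq) simp
  also have "\<dots> = ((\<Sum>t<T. W t \<omega>) + (\<Sum>t<T. z t \<omega>)) / SX T \<omega>"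
    by (simp add: sum_divide_distrib[symmetric] sum.distrib)
  finally show ?thesis using assms unfolding rbar_eq T_def[symmetric] by simp
qed

lemma event_bound:
  fixes j :: nat
  defines "T \<equiv> steps_upto j"
  defines "\<epsilon>0 \<equiv> (1/2::real)^(N+4)"
  defines "\<delta> \<equiv> \<epsilon>0 * c / 32"
  assumes T: "T \<ge> 1" and small: "exp (- (real T / 8)) \<le> \<epsilon>0 / 4"
  shows "prob {\<omega> \<in> space M. \<bar>rbar N n U A \<nu> j \<omega> - expectation (rbar N n U A \<nu> j)\<bar>
              > (1 / 2) ^ (N + 4) * expectation (rbar N n U A \<nu> j)}
     \<le> exp (- (real T / 8)) + 2 * exp (- (real T * \<delta>\<^sup>2 / (2 * sW))) + 2 * exp (- (real T * \<delta>\<^sup>2 / (2 * (b + 1))))"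
proof -
  define B1 where "B1 = {\<omega> \<in> space M. SX T \<omega> \<le> real T / 4}"
  define B2 where "B2 = {\<omega> \<in> space M. \<bar>\<Sum>t\<in>{..<T}. W t \<omega>\<bar> \<ge> real T * \<delta>}"
  define B3 where "B3 = {\<omega> \<in> space M. \<bar>\<Sum>t\<in>{..<T}. z t \<omega>\<bar> \<ge> real T * \<delta>}"
  define m where "m = expectation (rbar N n U A \<nu> j)"
  have e0: "0 < \<epsilon>0" "\<epsilon>0 \<le> 1" unfolding \<epsilon>0_def by (simp_all add: power_le_one)
  have dpos: "\<delta> > 0" using e0 c_pos by (simp add: \<delta>_def)
  have sets[measurable]: "B1 \<in> sets M" "B2 \<in> sets M" "B3 \<in> sets M"
    unfolding B1_def B2_def B3_def by measurable
  have pB1: "prob B1 \<le> \<epsilon>0 / 4" using bound_SX[of T] small unfolding B1_def by linarith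
  have p1: "prob {\<omega> \<in> space M. SX T \<omega> \<noteq> 0} \<ge> 1 - \<epsilon>0 / 4"
  proof -
    have "space M - B1 \<subseteq> {\<omega> \<in> space M. SX T \<omega> \<noteq> 0}" using T by (auto simp: B1_def)
    then have "prob (space M - B1) \<le> prob {\<omega> \<in> space M. SX T \<omega> \<noteq> 0}"
      by (intro finite_measure_mono) auto
    then show ?thesis using prob_compl[OF sets(1)] pB1 by linarith
  qed
  have p1': "prob {\<omega> \<in> space M. SX T \<omega> \<noteq> 0} \<le> 1" by simp
  have m: "m = c * prob {\<omega> \<in> space M. SX T \<omega> \<noteq> 0}" unfolding m_def T_def by (rule E_rbar)
  have sub: "{\<omega> \<in> space M. \<bar>rbar N n U A \<nu> j \<omega> - m\<bar> > \<epsilon>0 * m} \<subseteq> B1 \<union> B2 \<union> B3"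
  proof
    fix \<omega> assume w: "\<omega> \<in> {\<omega> \<in> space M. \<bar>rbar N n U A \<nu> j \<omega> - m\<bar> > \<epsilon>0 * m}"
    show "\<omega> \<in> B1 \<union> B2 \<union> B3"
    proof (rule ccontr)
      assume "\<omega> \<notin> B1 \<union> B2 \<union> B3"
      then have h1: "SX T \<omega> > real T / 4" and h2: "\<bar>\<Sum>t<T. W t \<omega>\<bar> < real T * \<delta>"
        and h3: "\<bar>\<Sum>t<T. z t \<omega>\<bar> < real T * \<delta>"
        using w by (auto simp: B1_def B2_def B3_def)
      have Tp: "real T > 0" using T by simp
      have Sp: "SX T \<omega> > 0" using h1 Tp by linarith
      define x where "x = (\<Sum>t<T. W t \<omega>) + (\<Sum>t<T. z t \<omega>)"
      have r: "rbar N n U A \<nu> j \<omega> = c + x / SX T \<omega>"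
        using rbar_good[of j \<omega>] Sp unfolding x_def T_def by simp
      have hx: "\<bar>x\<bar> < 2 * real T * \<delta>" using h2 h3 unfolding x_def by linarith
      have "\<bar>x / SX T \<omega>\<bar> = \<bar>x\<bar> / SX T \<omega>" using Sp by simp
      also have "\<dots> \<le> \<bar>x\<bar> / (real T / 4)"
        using Sp h1 Tp by (intro divide_left_mono) auto
      also have "\<dots> < (2 * real T * \<delta>) / (real T / 4)"
        using hx Tp by (intro divide_strict_right_mono) auto
      also have "\<dots> = 8 * \<delta>" using Tp by (simp add: field_simps)
      finally have xb: "\<bar>x / SX T \<omega>\<bar> < 8 * \<delta>" .
      define p where "p = prob {\<omega> \<in> space M. SX T \<omega> \<noteq> 0}"
      have pp: "1 - \<epsilon>0 / 4 \<le> p" "p \<le> 1" using p1 p1' unfolding p_def by auto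
      have mp: "m = c * p" using m unfolding p_def .
      have "\<bar>rbar N n U A \<nu> j \<omega> - m\<bar> \<le> \<bar>x / SX T \<omega>\<bar> + c * (1 - p)"
      proof -
        have nn: "c * (1 - p) \<ge> 0" using c_pos pp by simp
        have "c + x / SX T \<omega> - c * p = x / SX T \<omega> + c * (1 - p)" by (simp add: algebra_simps)
        then have "\<bar>c + x / SX T \<omega> - c * p\<bar> \<le> \<bar>x / SX T \<omega>\<bar> + \<bar>c * (1 - p)\<bar>"
          using abs_triangle_ineq by metis
        then show ?thesis unfolding r mp using nn by simp
      qed
      also have "\<dots> < 8 * \<delta> + c * (\<epsilon>0 / 4)"
      proof -
        have "c * (1 - p) \<le> c * (\<epsilon>0 / 4)" using c_pos pp by (intro mult_left_mono) auto
        then show ?thesis using xb by linarith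
      qed
      also have "\<dots> = \<epsilon>0 * c / 2" by (simp add: \<delta>_def)
      also have "\<dots> \<le> \<epsilon>0 * m"
      proof -
        have "1/2 \<le> p" using pp e0 by linarith
        then have "c * (1/2) \<le> c * p" using c_pos by (intro mult_left_mono) auto
        then show ?thesis unfolding mp using e0 by (simp add: mult_left_mono)
      qed
      finally show False using w by simp
    qed
  qed
  have "prob {\<omega> \<in> space M. \<bar>rbar N n U A \<nu> j \<omega> - m\<bar> > \<epsilon>0 * m} \<le> prob (B1 \<union> B2 \<union> B3)"
    by (intro finite_measure_mono sub) auto
  also have "\<dots> \<le> prob B1 + prob B2 + prob B3"
    by (meson measure_Un_le add_right_mono order_trans sets sets.Un)
  also have "\<dots> \<le> exp (- (real T / 8)) + 2 * exp (- (real T * \<delta>\<^sup>2 / (2 * sW))) + 2 * exp (- (real T * \<delta>\<^sup>2 / (2 * (b + 1))))"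
    unfolding B1_def B2_def B3_def
    by (intro add_mono bound_SX bound_W bound_z) (use dpos in auto)
  finally show ?thesis unfolding m_def \<epsilon>0_def .
qed

end


lemma steps_real: "real (steps_upto j) = real j * (real j + 1) / 2"
proof -
  have "even (j * (j + 1))" by simp
  then have "2 * steps_upto j = j * (j + 1)" unfolding steps_upto_def by simp
  then have "real (2 * steps_upto j) = real (j * (j + 1))" by (simp only:)
  then show ?thesis by (simp add: algebra_simps)
qed

lemma aux_powr: "(\<lambda>j. real j powr 1.4) \<in> o(\<lambda>j. real j ^ 2)" by real_asymp

lemma aux_exp: "(\<lambda>j. exp (- (real j / 8))) \<longlonglongrightarrow> 0" by real_asymp

theorem lemma6:
  fixes M :: "'a measure"
    and N n :: nat and U b :: real
    and A :: "nat \<Rightarrow> nat \<Rightarrow> 'a \<Rightarrow> bool"   \<comment> \<open>A t k: agent k accesses resource 1 at step t\<close>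
    and \<nu> :: "nat \<Rightarrow> nat \<Rightarrow> 'a \<Rightarrow> real"   \<comment> \<open>noise of agent k at step t\<close>
  assumes M: "prob_space M"
    and n: "n < N"
    and U: "0 < U"
    and indep: "prob_space.indep_vars M (\<lambda>_. borel)
        (\<lambda>i \<omega>. case i of Inl (t, k) \<Rightarrow> of_bool (A t k \<omega>) | Inr (t, k) \<Rightarrow> \<nu> t k \<omega>)
        {i. case i of Inl (t, k) \<Rightarrow> k < N | Inr (t, k) \<Rightarrow> k < N}"
    and access: "\<And>t k. k < N \<Longrightarrow> measure M {\<omega> \<in> space M. A t k \<omega>} = 1 / 2"
    and noise: "\<And>t k. k < N \<Longrightarrow> subgaussian M (\<nu> t k) b"
    and ident: "\<And>t k. k < N \<Longrightarrow> distr M borel (\<nu> t k) = distr M borel (\<nu> 0 0)"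
  shows "(\<lambda>j. measure M {\<omega> \<in> space M.
            \<bar>rbar N n U A \<nu> j \<omega> - integral\<^sup>L M (rbar N n U A \<nu> j)\<bar>
              > (1 / 2) ^ (N + 4) * integral\<^sup>L M (rbar N n U A \<nu> j)})
         \<in> O(\<lambda>j. exp (- (real j powr 1.4)))"
proof -
  interpret prob_space M by (rule M)
  interpret ene M N n U b A \<nu>
    by unfold_locales (use n U indep access noise M in \<open>simp_all add: Vf_def\<close>)
  define \<epsilon>0 :: real where "\<epsilon>0 = (1/2)^(N+4)"
  define \<delta> where "\<delta> = \<epsilon>0 * c / 32"
  define \<kappa> where "\<kappa> = min (1/8) (min (\<delta>\<^sup>2 / (2 * sW)) (\<delta>\<^sup>2 / (2 * (b + 1))))"
  have e0: "\<epsilon>0 > 0" by (simp add: \<epsilon>0_def)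
  have dpos: "\<delta> > 0" using e0 c_pos by (simp add: \<delta>_def)
  have bp: "b + 1 > 0" using b_nonneg by simp
  have kpos: "\<kappa> > 0" using dpos sW_pos bp by (simp add: \<kappa>_def)
  define f where "f j = measure M {\<omega> \<in> space M.
            \<bar>rbar N n U A \<nu> j \<omega> - integral\<^sup>L M (rbar N n U A \<nu> j)\<bar>
              > (1 / 2) ^ (N + 4) * integral\<^sup>L M (rbar N n U A \<nu> j)}" for j
  have ev1: "eventually (\<lambda>j. exp (- (real j / 8)) < \<epsilon>0 / 4) sequentially"
    using order_tendstoD(2)[OF aux_exp, of "\<epsilon>0 / 4"] e0 by simp
  have ev2: "eventually (\<lambda>j. norm (real j powr 1.4) \<le> (\<kappa> / 2) * norm (real j ^ 2)) sequentially"
    using landau_o.smallD[OF aux_powr, of "\<kappa> / 2"] kpos by simp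
  have ev3: "eventually (\<lambda>j::nat. j \<ge> 1) sequentially" by (simp add: eventually_ge_at_top)
  have "eventually (\<lambda>j. norm (f j) \<le> 5 * norm (exp (- (real j powr 1.4)))) sequentially"
    using ev1 ev2 ev3
  proof eventually_elim
    case (elim j)
    define T where "T = steps_upto j"
    have TR: "real T = real j * (real j + 1) / 2" unfolding T_def by (rule steps_real)
    have Tj: "real T \<ge> real j" using elim(3) unfolding TR by (simp add: field_simps)
    have Tj2: "real T \<ge> real j ^ 2 / 2" unfolding TR by (simp add: field_simps power2_eq_square)
    have T1: "T \<ge> 1" using Tj elim(3) by linarith
    have small: "exp (- (real T / 8)) \<le> \<epsilon>0 / 4"
    proof -
      have "- (real T / 8) \<le> - (real j / 8)" using Tj by simp
      then have "exp (- (real T / 8)) \<le> exp (- (real j / 8))" by (simp only: exp_le_cancel_iff)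
      then show ?thesis using elim(1) by linarith
    qed
    have "f j \<le> exp (- (real T / 8)) + 2 * exp (- (real T * \<delta>\<^sup>2 / (2 * sW))) + 2 * exp (- (real T * \<delta>\<^sup>2 / (2 * (b + 1))))"
      unfolding f_def using event_bound[of j] T1 small unfolding T_def \<epsilon>0_def \<delta>_def by simp
    also have "\<dots> \<le> exp (- (real T * \<kappa>)) + 2 * exp (- (real T * \<kappa>)) + 2 * exp (- (real T * \<kappa>))"
    proof -
      have "\<kappa> \<le> 1/8" "\<kappa> \<le> \<delta>\<^sup>2 / (2 * sW)" "\<kappa> \<le> \<delta>\<^sup>2 / (2 * (b + 1))" unfolding \<kappa>_def by linarith+
      then have k: "real T * \<kappa> \<le> real T * (1/8)" "real T * \<kappa> \<le> real T * (\<delta>\<^sup>2 / (2 * sW))"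
        "real T * \<kappa> \<le> real T * (\<delta>\<^sup>2 / (2 * (b + 1)))"
        by (intro mult_left_mono; simp)+
      then have "real T * \<kappa> \<le> real T / 8" "real T * \<kappa> \<le> real T * \<delta>\<^sup>2 / (2 * sW)"
        "real T * \<kappa> \<le> real T * \<delta>\<^sup>2 / (2 * (b + 1))" by (simp_all only: times_divide_eq_right mult_1_right)
      then have "exp (- (real T / 8)) \<le> exp (- (real T * \<kappa>))"
        "exp (- (real T * \<delta>\<^sup>2 / (2 * sW))) \<le> exp (- (real T * \<kappa>))"
        "exp (- (real T * \<delta>\<^sup>2 / (2 * (b + 1)))) \<le> exp (- (real T * \<kappa>))"
        by (simp_all only: exp_le_cancel_iff neg_le_iff_le)
      then show ?thesis by linarith
    qed
    also have "\<dots> = 5 * exp (- (real T * \<kappa>))" by simp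
    also have "\<dots> \<le> 5 * exp (- (real j powr 1.4))"
    proof -
      have "real j powr 1.4 \<le> (\<kappa> / 2) * real j ^ 2" using elim(2) by simp
      also have "\<dots> = \<kappa> * (real j ^ 2 / 2)" by simp
      also have "\<dots> \<le> \<kappa> * real T" using Tj2 kpos by (intro mult_left_mono) auto
      finally have "- (real T * \<kappa>) \<le> - (real j powr 1.4)" by (simp add: mult.commute)
      then have "exp (- (real T * \<kappa>)) \<le> exp (- (real j powr 1.4))" by (simp only: exp_le_cancel_iff)
      then show ?thesis by simp
    qed
    finally show ?case by (simp add: f_def)
  qed
  then have "f \<in> O(\<lambda>j. exp (- (real j powr 1.4)))"
    by (intro bigoI[where c=5])
  then show ?thesis unfolding f_def .
qed

end
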